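(* In the homogeneous case $\rho(du|s)=\rho(du)$ with $\Lambda_0(t)=t$, suppose that given $(\mathbf m,\mathbf p)$ the ordered distinct times $T_{(1:n)}>\dots>T_{(n(\mathbf p):n)}$ have joint density (with respect to Lebesgue measure on $\{t_1>\dots>t_{n(\mathbf p)}>0\}$) $$\Big[\prod_{j=1}^{n(\mathbf p)}\phi(r_j)\Big]\prod_{j=1}^{n(\mathbf p)}e^{-\psi_{m_j,r_{j-1}}t_j}.$$ Then, conditionally on $T_{(j+1:n)},\dots,T_{(n(\mathbf p):n)}$, the distribution of $T_{(j:n)}$ depends only on $T_{(j+1:n)}=t_{j+1}$ and is the truncated exponential distribution $$\mathbb P(T_{(j:n)}\in dt_j\mid T_{(j+1:n)}=t_{j+1})=\phi(r_j)e^{-\phi(r_j)(t_j-t_{j+1})}dt_j,\qquad t_j>t_{j+1}.$$ In particular the smallest value $T_{(n(\mathbf p):n)}$ has density $\phi(n)e^{-\phi(n)y}$, $y>0$.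
   Context: $\rho(du)$ is a Lévy measure on $[0,1]$ with $\int_0^1u\rho(du)=1$. $\mathbf p$ is a partition of $\{1,\dots,n\}$ into $n(\mathbf p)$ blocks, $\mathbf m=(E_{(1)},\dots,E_{(n(\mathbf p))})$ an ordering of its blocks, $m_j=|E_{(j)}|$, $r_0=0$, $r_j=\sum_{l\le j}m_l$ (so $r_{n(\mathbf p)}=n$). $\phi(\omega)=\int_0^1(1-(1-u)^\omega)\rho(du)$ and $\psi_{i,k}=\int_0^1(1-(1-u)^i)(1-u)^k\rho(du)$. (This density is the homogeneous conditional law of the ordered distinct death times given $(\mathbf m,\mathbf p)$ for a sample from a spatial NTR process with hazard $\Lambda_0(t)=t$.) *)

theory Defs
  imports "HOL-Probability.Probability"
begin

definition levy_measure_01 :: "real measure \<Rightarrow> bool" where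
  "levy_measure_01 \<rho> \<longleftrightarrow> sets \<rho> = sets borel \<and> emeasure \<rho> (- {0<..1}) = 0
     \<and> (\<integral>\<^sup>+ u. ennreal u \<partial>\<rho>) < \<infinity>"

definition phi :: "real measure \<Rightarrow> nat \<Rightarrow> real" where
  "phi \<rho> \<omega> = (\<integral> u. (1 - (1 - u) ^ \<omega>) \<partial>\<rho>)"

definition psi :: "real measure \<Rightarrow> nat \<Rightarrow> nat \<Rightarrow> real" where
  "psi \<rho> i k = (\<integral> u. (1 - (1 - u) ^ i) * (1 - u) ^ k \<partial>\<rho>)"

definition ordered_partition :: "nat \<Rightarrow> nat set list \<Rightarrow> bool" where
  "ordered_partition n Es \<longleftrightarrow> (\<forall>E\<in>set Es. E \<noteq> {})
     \<and> (\<forall>i<length Es. \<forall>j<length Es. i \<noteq> j \<longrightarrow> Es ! i \<inter> Es ! j = {})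
     \<and> \<Union> (set Es) = {1..n}"

text \<open>Block sizes m_j (1-based) and partial sums r_j, with r_0 = 0.\<close>
definition blk :: "nat set list \<Rightarrow> nat \<Rightarrow> nat" where
  "blk Es j = card (Es ! (j - 1))"

definition rsum :: "nat set list \<Rightarrow> nat \<Rightarrow> nat" where
  "rsum Es j = (\<Sum>l\<in>{1..j}. blk Es l)"

definition ntr_density :: "real measure \<Rightarrow> nat set list \<Rightarrow> (nat \<Rightarrow> real) \<Rightarrow> ennreal" where
  "ntr_density \<rho> Es t =
     indicator {t. (\<forall>j\<in>{1..<length Es}. t j > t (Suc j)) \<and> t (length Es) > 0} t *
     ennreal ((\<Prod>j\<in>{1..length Es}. phi \<rho> (rsum Es j)) *
              (\<Prod>j\<in>{1..length Es}. exp (- psi \<rho> (blk Es j) (rsum Es (j - 1)) * t j)))"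

end

theory Submission
  imports Defs
begin


lemma AE_01: assumes "levy_measure_01 \<rho>" shows "AE u in \<rho>. u \<in> {0<..1}"
proof (rule AE_I[of _ _ "- {0<..1}"])
  show "{x \<in> space \<rho>. x \<notin> {0<..1}} \<subseteq> - {0<..1}" by auto
  show "emeasure \<rho> (- {0<..1}) = 0" using assms by (simp add: levy_measure_01_def)
  show "- {0<..1} \<in> sets \<rho>" using assms by (simp add: levy_measure_01_def)
qed

lemma integrable_u: assumes "levy_measure_01 \<rho>" shows "integrable \<rho> (\<lambda>u. u)"
proof (rule integrableI_nonneg)
  have s: "sets \<rho> = sets borel" using assms by (simp add: levy_measure_01_def)
  show "(\<lambda>u. u) \<in> borel_measurable \<rho>"
    by (subst measurable_cong_sets[OF s refl]) simp
  show "AE x in \<rho>. 0 \<le> x" using AE_01[OF assms] by eventually_elim auto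
  show "(\<integral>\<^sup>+x. ennreal x \<partial>\<rho>) < \<infinity>" using assms by (simp add: levy_measure_01_def)
qed

lemma integrable_phi: assumes "levy_measure_01 \<rho>" shows "integrable \<rho> (\<lambda>u. 1 - (1 - u) ^ w)"
proof (rule Bochner_Integration.integrable_bound[where f="\<lambda>u. real w * u"])
  show "integrable \<rho> (\<lambda>u. real w * u)" using integrable_u[OF assms] by simp
  have s: "sets \<rho> = sets borel" using assms by (simp add: levy_measure_01_def)
  show "(\<lambda>u. 1 - (1 - u) ^ w) \<in> borel_measurable \<rho>"
    by (subst measurable_cong_sets[OF s refl]) simp
  show "AE x in \<rho>. norm (1 - (1 - x) ^ w) \<le> norm (real w * x)"
    using AE_01[OF assms]
  proof eventually_elim
    case (elim x)
    then have "0 \<le> (1 - x) ^ w" "(1-x)^w \<le> 1" by (auto intro: power_le_one)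
    moreover have "1 + real w * (- x) \<le> (1 + - x) ^ w"
      using elim by (intro Bernoulli_inequality) auto
    ultimately show ?case using elim by auto
  qed
qed

lemma phi_nonneg: assumes "levy_measure_01 \<rho>" shows "0 \<le> phi \<rho> w"
  unfolding phi_def
proof (intro integral_nonneg_AE)
  show "AE x in \<rho>. 0 \<le> 1 - (1 - x) ^ w" using AE_01[OF assms]
    by eventually_elim (auto intro: power_le_one)
qed

lemma phi_pos: assumes "levy_measure_01 \<rho>" "(\<integral>\<^sup>+ u. ennreal u \<partial>\<rho>) = 1" "w \<ge> 1"
  shows "0 < phi \<rho> w"
proof (rule ccontr)
  assume "\<not> 0 < phi \<rho> w"
  then have "phi \<rho> w = 0" using phi_nonneg[OF assms(1), of w] by simp
  moreover have nn: "AE u in \<rho>. 0 \<le> 1 - (1 - u) ^ w" using AE_01[OF assms(1)]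
    by eventually_elim (auto intro: power_le_one)
  ultimately have "AE u in \<rho>. 1 - (1 - u) ^ w = 0"
    unfolding phi_def using integral_nonneg_eq_0_iff_AE[OF integrable_phi[OF assms(1)] nn] by simp
  then have "AE u in \<rho>. False" using AE_01[OF assms(1)]
  proof eventually_elim
    case (elim u)
    then have "(1 - u) ^ w < 1" using assms(3)
      by (intro power_less_one_iff[THEN iffD2]) auto
    then show False using elim by simp
  qed
  then have "AE u in \<rho>. ennreal u = 0" by (auto elim: eventually_mono)
  then have "(\<integral>\<^sup>+ u. ennreal u \<partial>\<rho>) = 0" by (simp add: nn_integral_cong_AE)
  then show False using assms(2) by simp
qed

lemma psi_eq: assumes "levy_measure_01 \<rho>"
  shows "psi \<rho> m k = phi \<rho> (k + m) - phi \<rho> k"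
proof -
  have "phi \<rho> (k + m) - phi \<rho> k = (\<integral>u. (1 - (1 - u) ^ (k+m)) - (1 - (1 - u) ^ k) \<partial>\<rho>)"
    unfolding phi_def by (rule Bochner_Integration.integral_diff[symmetric]) (rule integrable_phi[OF assms])+
  also have "\<dots> = psi \<rho> m k" unfolding psi_def
    by (rule Bochner_Integration.integral_cong) (auto simp: algebra_simps power_add)
  finally show ?thesis by simp
qed

lemma phi0: "phi \<rho> 0 = 0" by (simp add: phi_def)

lemma lim_exp: fixes c a :: real assumes "c > 0"
  shows "((\<lambda>y. - exp (- c * (y - a))) \<longlongrightarrow> 0) at_top"
proof -
  have L1: "filterlim (\<lambda>y. c * (-a + y)) at_top at_top"
    by (rule filterlim_tendsto_pos_mult_at_top[OF tendsto_const assms filterlim_tendsto_add_at_top[OF tendsto_const filterlim_ident]])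
  have L2: "filterlim (\<lambda>y. - (c * (-a + y))) at_bot at_top"
    by (rule filterlim_compose[OF filterlim_uminus_at_bot_at_top L1])
  have L3: "((\<lambda>y. exp (- (c * (-a + y)))) \<longlongrightarrow> 0) at_top"
    by (rule filterlim_compose[OF exp_at_bot L2])
  have "((\<lambda>y. - exp (- (c * (-a + y)))) \<longlongrightarrow> - 0) at_top" by (rule tendsto_minus[OF L3])
  moreover have "(\<lambda>y. - exp (- c * (y - a))) = (\<lambda>y. - exp (- (c * (-a + y))))" by (simp add: algebra_simps)
  ultimately show ?thesis by simp
qed

lemma exp_int: fixes c a :: real assumes "c > 0"
  shows "(\<integral>\<^sup>+ y. ennreal (c * exp (- c * (y - a))) * indicator {a<..} y \<partial>lborel) = 1"
proof -
  have "(\<integral>\<^sup>+ y. ennreal (c * exp (- c * (y - a))) * indicator {a<..} y \<partial>lborel)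
      = (\<integral>\<^sup>+ y. ennreal (c * exp (- c * (y - a))) * indicator {a..} y \<partial>lborel)"
    by (rule nn_integral_cong_AE) (use AE_lborel_singleton[of a] in \<open>auto elim!: eventually_mono split: split_indicator\<close>)
  also have "\<dots> = ennreal (0 - (- exp (- c * (a - a))))"
  proof (rule nn_integral_FTC_atLeast[where F="\<lambda>y. - exp (- c * (y - a))"])
    show "(\<lambda>y. c * exp (- c * (y - a))) \<in> borel_measurable borel" by simp
    show "((\<lambda>y. - exp (- c * (y - a))) has_real_derivative c * exp (- c * (x - a))) (at x)" for x
      by (auto intro!: derivative_eq_intros)
    show "0 \<le> c * exp (- c * (x - a))" for x using assms by simp
    show "((\<lambda>y. - exp (- c * (y - a))) \<longlongrightarrow> 0) at_top" using lim_exp[OF assms] .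
  qed
  finally show ?thesis by simp
qed



definition kk :: "real measure \<Rightarrow> nat set list \<Rightarrow> nat \<Rightarrow> (nat \<Rightarrow> real) \<Rightarrow> ennreal" where
  "kk \<rho> Es l t = (if l = length Es
     then ennreal (phi \<rho> (rsum Es l) * exp (- phi \<rho> (rsum Es l) * (t l - 0))) * indicator {0<..} (t l)
     else ennreal (phi \<rho> (rsum Es l) * exp (- phi \<rho> (rsum Es l) * (t l - t (Suc l)))) * indicator {t (Suc l)<..} (t l))"

definition FF :: "real measure \<Rightarrow> nat set list \<Rightarrow> nat \<Rightarrow> (nat \<Rightarrow> real) \<Rightarrow> ennreal" where
  "FF \<rho> Es j t = (\<Prod>l\<in>{j..length Es}. kk \<rho> Es l t)"

lemma ind_meas: "(\<lambda>t::nat\<Rightarrow>real. indicator {t b<..} (t a) :: ennreal) \<in> borel_measurable (PiM I (\<lambda>_. lborel))"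
  if "a \<in> I" "b \<in> I"
proof -
  have e: "(\<lambda>t::nat\<Rightarrow>real. indicator {t b<..} (t a) :: ennreal) = indicator {p::real\<times>real. fst p < snd p} \<circ> (\<lambda>t. (t b, t a))"
    by (auto simp: fun_eq_iff split: split_indicator)
  have m1: "(\<lambda>t::nat\<Rightarrow>real. (t b, t a)) \<in> measurable (PiM I (\<lambda>_. lborel)) (borel \<Otimes>\<^sub>M borel)"
    using that by (intro measurable_Pair) (auto simp: measurable_lborel2[symmetric])
  have "open {p::real\<times>real. fst p < snd p}"
    by (intro open_Collect_less continuous_intros)
  then have "{p::real\<times>real. fst p < snd p} \<in> sets (borel \<Otimes>\<^sub>M borel)"
    unfolding borel_prod by (rule borel_open)
  then have m2: "(indicator {p::real\<times>real. fst p < snd p} :: _ \<Rightarrow> ennreal) \<in> borel_measurable (borel \<Otimes>\<^sub>M borel)"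
    by (rule borel_measurable_indicator)
  show ?thesis unfolding e by (rule measurable_comp[OF m1 m2])
qed

lemma comp_meas: "i \<in> I \<Longrightarrow> (\<lambda>t::nat\<Rightarrow>real. t i) \<in> borel_measurable (PiM I (\<lambda>_. lborel))"
  using measurable_component_singleton[of i I "\<lambda>_. lborel :: real measure"] by (simp add: measurable_lborel2)

lemma kk_meas: assumes "l \<in> I" "l \<noteq> length Es \<Longrightarrow> Suc l \<in> I"
  shows "kk \<rho> Es l \<in> borel_measurable (PiM I (\<lambda>_. lborel))"
proof (cases "l = length Es")
  case True
  then have *: "kk \<rho> Es l = (\<lambda>t. ennreal (phi \<rho> (rsum Es l) * exp (- phi \<rho> (rsum Es l) * (t l - 0))) * indicator {0<..} (t l))"
    unfolding kk_def by (simp add: fun_eq_iff)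
  note c1[measurable] = comp_meas[OF assms(1)]
  show ?thesis unfolding * by measurable
next
  case False
  then have *: "kk \<rho> Es l = (\<lambda>t. ennreal (phi \<rho> (rsum Es l) * exp (- phi \<rho> (rsum Es l) * (t l - t (Suc l)))) * indicator {t (Suc l)<..} (t l))"
    unfolding kk_def by (simp add: fun_eq_iff)
  note c1[measurable] = comp_meas[OF assms(1)] comp_meas[OF assms(2)[OF False]]
  have "(\<lambda>t. ennreal (phi \<rho> (rsum Es l) * exp (- phi \<rho> (rsum Es l) * (t l - t (Suc l))))) \<in> borel_measurable (PiM I (\<lambda>_. lborel))"
    by measurable
  then show ?thesis unfolding * 
    by (rule borel_measurable_times_ennreal) (rule ind_meas[OF assms(1) assms(2)[OF False]])
qed

lemma FF_meas: "FF \<rho> Es j \<in> borel_measurable (PiM {j..length Es} (\<lambda>_. lborel))"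
  unfolding FF_def by (intro borel_measurable_prod_ennreal kk_meas) auto

lemma FF_step: assumes "j < length Es"
  shows "FF \<rho> Es j t = FF \<rho> Es (Suc j) (restrict t {Suc j..length Es}) *
     (ennreal (phi \<rho> (rsum Es j) * exp (- phi \<rho> (rsum Es j) * (t j - t (Suc j)))) * indicator {t (Suc j)<..} (t j))"
proof -
  have e: "{j..length Es} = insert j {Suc j..length Es}" using assms by auto
  have "FF \<rho> Es (Suc j) (restrict t {Suc j..length Es}) = (\<Prod>l\<in>{Suc j..length Es}. kk \<rho> Es l t)"
    unfolding FF_def by (rule prod.cong) (auto simp: kk_def)
  then show ?thesis unfolding FF_def e using assms by (simp add: kk_def mult.commute)
qed

lemma marg:
  fixes T :: "nat \<Rightarrow> 'a \<Rightarrow> real" and G :: "(nat \<Rightarrow> real) \<Rightarrow> ennreal" and h :: "real \<Rightarrow> real \<Rightarrow> ennreal"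
  assumes fin: "finite J" and jJ: "j \<notin> J" and jjJ: "jj \<in> J" and I: "I = insert j J"
  and D: "distributed M (PiM I (\<lambda>_. lborel)) (\<lambda>\<omega>. \<lambda>i\<in>I. T i \<omega>) (\<lambda>t. G (restrict t J) * h (t j) (t jj))"
  and Gm: "G \<in> borel_measurable (PiM J (\<lambda>_. lborel))"
  and hm: "\<And>a. (\<lambda>y. h y a) \<in> borel_measurable borel"
  and h1: "\<And>a. (\<integral>\<^sup>+ y. h y a \<partial>lborel) = 1"
  shows "distributed M (PiM J (\<lambda>_. lborel)) (\<lambda>\<omega>. \<lambda>i\<in>J. T i \<omega>) G"
proof -
  interpret product_sigma_finite "\<lambda>_::nat. lborel :: real measure" by standard
  let ?PI = "PiM I (\<lambda>_::nat. lborel :: real measure)"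
  let ?PJ = "PiM J (\<lambda>_::nat. lborel :: real measure)"
  let ?f = "\<lambda>t. G (restrict t J) * h (t j) (t jj)"
  let ?XI = "\<lambda>\<omega>. \<lambda>i\<in>I. T i \<omega>"
  have XI: "?XI \<in> measurable M ?PI" using D by (simp add: distributed_def)
  have fm: "?f \<in> borel_measurable ?PI" using D by (simp add: distributed_def)
  have XJ_eq: "(\<lambda>\<omega>. \<lambda>i\<in>J. T i \<omega>) = (\<lambda>t. restrict t J) \<circ> ?XI"
    using I by (auto simp: fun_eq_iff restrict_def)
  have r: "(\<lambda>t. restrict t J) \<in> measurable ?PI ?PJ" using I by (intro measurable_restrict_subset) auto
  have XJ: "(\<lambda>\<omega>. \<lambda>i\<in>J. T i \<omega>) \<in> measurable M ?PJ" unfolding XJ_eq using measurable_comp[OF XI r] .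
  have "distr M ?PJ (\<lambda>\<omega>. \<lambda>i\<in>J. T i \<omega>) = distr (distr M ?PI ?XI) ?PJ (\<lambda>t. restrict t J)"
    unfolding XJ_eq by (rule distr_distr[OF r XI, symmetric])
  also have "\<dots> = distr (density ?PI ?f) ?PJ (\<lambda>t. restrict t J)"
    using D by (simp add: distributed_def)
  also have "\<dots> = density ?PJ G"
  proof (rule measure_eqI)
    show "sets (distr (density ?PI ?f) ?PJ (\<lambda>t. restrict t J)) = sets (density ?PJ G)" by simp
    fix A assume A: "A \<in> sets (distr (density ?PI ?f) ?PJ (\<lambda>t. restrict t J))"
    then have A': "A \<in> sets ?PJ" by simp
    have r': "(\<lambda>t. restrict t J) \<in> measurable (density ?PI ?f) ?PJ"
      using r by (simp add: measurable_cong_sets[OF sets_density refl])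
    have "emeasure (distr (density ?PI ?f) ?PJ (\<lambda>t. restrict t J)) A
        = emeasure (density ?PI ?f) ((\<lambda>t. restrict t J) -` A \<inter> space (density ?PI ?f))"
      by (rule emeasure_distr[OF r' A'])
    also have "\<dots> = (\<integral>\<^sup>+ t. ?f t * indicator ((\<lambda>t. restrict t J) -` A \<inter> space ?PI) t \<partial>?PI)"
      using measurable_sets[OF r A'] fm by (simp add: emeasure_density nn_integral_set_ennreal)
    also have "\<dots> = (\<integral>\<^sup>+ t. ?f t * indicator A (restrict t J) \<partial>?PI)"
      by (rule nn_integral_cong) (auto split: split_indicator)
    also have "\<dots> = (\<integral>\<^sup>+ x. (\<integral>\<^sup>+ y. ?f (x(j:=y)) * indicator A (restrict (x(j:=y)) J) \<partial>lborel) \<partial>?PJ)"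
      unfolding I
    proof (rule product_nn_integral_insert[OF fin jJ])
      have "(\<lambda>t. indicator A (restrict t J) :: ennreal) \<in> borel_measurable ?PI"
        using measurable_comp[OF r borel_measurable_indicator[OF A']] by (simp add: comp_def)
      with fm have "(\<lambda>t. ?f t * indicator A (restrict t J)) \<in> borel_measurable ?PI"
        by (rule borel_measurable_times_ennreal)
      then show "(\<lambda>t. ?f t * indicator A (restrict t J)) \<in> borel_measurable (PiM (insert j J) (\<lambda>_. lborel))"
        unfolding I .
    qed
    also have "\<dots> = (\<integral>\<^sup>+ x. G x * indicator A x \<partial>?PJ)"
    proof (rule nn_integral_cong)
      fix x assume x: "x \<in> space ?PJ"
      have rx: "restrict (x(j:=y)) J = x" for y using x jJ
        by (auto simp: space_PiM PiE_def extensional_def restrict_def fun_eq_iff)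
      have jj: "jj \<noteq> j" using jJ jjJ by auto
      have "(\<integral>\<^sup>+ y. ?f (x(j:=y)) * indicator A (restrict (x(j:=y)) J) \<partial>lborel)
          = (\<integral>\<^sup>+ y. (G x * indicator A x) * h y (x jj) \<partial>lborel)"
        using jj rx by (intro nn_integral_cong) (simp add: mult_ac)
      also have "\<dots> = (G x * indicator A x) * (\<integral>\<^sup>+ y. h y (x jj) \<partial>lborel)"
        by (rule nn_integral_cmult) (use hm[of "x jj"] in simp)
      also have "\<dots> = G x * indicator A x" using h1 by simp
      finally show "(\<integral>\<^sup>+ y. ?f (x(j:=y)) * indicator A (restrict (x(j:=y)) J) \<partial>lborel) = G x * indicator A x" .
    qed
    also have "\<dots> = emeasure (density ?PJ G) A"
      using Gm A' by (simp add: emeasure_density nn_integral_set_ennreal)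
    finally show "emeasure (distr (density ?PI ?f) ?PJ (\<lambda>t. restrict t J)) A = emeasure (density ?PJ G) A" .
  qed
  finally show ?thesis unfolding distributed_def using Gm XJ by simp
qed

lemma single:
  fixes T :: "nat \<Rightarrow> 'a \<Rightarrow> real" and d :: "real \<Rightarrow> ennreal"
  assumes D: "distributed M (PiM {k} (\<lambda>_. lborel)) (\<lambda>\<omega>. \<lambda>i\<in>{k}. T i \<omega>) (\<lambda>t. d (t k))"
  and dm: "d \<in> borel_measurable borel"
  shows "distributed M lborel (T k) d"
proof -
  interpret product_sigma_finite "\<lambda>_::nat. lborel :: real measure" by standard
  let ?PI = "PiM {k} (\<lambda>_::nat. lborel :: real measure)"
  let ?XI = "\<lambda>\<omega>. \<lambda>i\<in>{k}. T i \<omega>"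
  let ?f = "\<lambda>t. d (t k)"
  have XI: "?XI \<in> measurable M ?PI" using D by (simp add: distributed_def)
  have fm: "?f \<in> borel_measurable ?PI" using D by (simp add: distributed_def)
  have eq: "T k = (\<lambda>t. t k) \<circ> ?XI" by (auto simp: fun_eq_iff)
  have r: "(\<lambda>t. t k) \<in> measurable ?PI lborel" by measurable
  have XJ: "T k \<in> measurable M lborel" unfolding eq using measurable_comp[OF XI r] .
  have "distr M lborel (T k) = distr (distr M ?PI ?XI) lborel (\<lambda>t. t k)"
    unfolding eq by (rule distr_distr[OF r XI, symmetric])
  also have "\<dots> = distr (density ?PI ?f) lborel (\<lambda>t. t k)"
    using D by (simp add: distributed_def)
  also have "\<dots> = density lborel d"
  proof (rule measure_eqI)
    show "sets (distr (density ?PI ?f) lborel (\<lambda>t. t k)) = sets (density lborel d)" by simp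
    fix A assume A: "A \<in> sets (distr (density ?PI ?f) lborel (\<lambda>t. t k))"
    then have A': "A \<in> sets lborel" by simp
    have r': "(\<lambda>t. t k) \<in> measurable (density ?PI ?f) lborel"
      using r by (simp add: measurable_cong_sets[OF sets_density refl])
    have "emeasure (distr (density ?PI ?f) lborel (\<lambda>t. t k)) A
        = emeasure (density ?PI ?f) ((\<lambda>t. t k) -` A \<inter> space (density ?PI ?f))"
      by (rule emeasure_distr[OF r' A'])
    also have "\<dots> = (\<integral>\<^sup>+ t. ?f t * indicator ((\<lambda>t. t k) -` A \<inter> space ?PI) t \<partial>?PI)"
      using measurable_sets[OF r A'] fm by (simp add: emeasure_density nn_integral_set_ennreal)
    also have "\<dots> = (\<integral>\<^sup>+ t. d (t k) * indicator A (t k) \<partial>?PI)"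
      by (rule nn_integral_cong) (auto split: split_indicator)
    also have "\<dots> = (\<integral>\<^sup>+ y. d y * indicator A y \<partial>lborel)"
      by (rule product_nn_integral_singleton) (use dm A' in simp)
    also have "\<dots> = emeasure (density lborel d) A"
      using dm A' by (simp add: emeasure_density nn_integral_set_ennreal)
    finally show "emeasure (distr (density ?PI ?f) lborel (\<lambda>t. t k)) A = emeasure (density lborel d) A" .
  qed
  finally show ?thesis unfolding distributed_def using dm XJ by simp
qed



lemma tele0: fixes c t :: "nat \<Rightarrow> real" assumes "c 0 = 0"
  shows "(\<Sum>l\<in>{1..N}. c l * (t l - t (Suc l))) + c N * t (Suc N) = (\<Sum>l\<in>{1..N}. (c l - c (l - 1)) * t l)"
  by (induction N) (auto simp: assms algebra_simps)

lemma tele: fixes c t :: "nat \<Rightarrow> real" assumes "c 0 = 0"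
  shows "(\<Sum>l\<in>{1..N}. c l * (t l - (if l = N then 0 else t (Suc l)))) = (\<Sum>l\<in>{1..N}. (c l - c (l - 1)) * t l)"
proof -
  have e: "c l * (t l - (if l = N then 0 else t (Suc l))) = c l * (t l - t (Suc l)) + (if l = N then c l * t (Suc l) else 0)" for l
    by (simp add: algebra_simps)
  have "(\<Sum>l\<in>{1..N}. c l * (t l - (if l = N then 0 else t (Suc l)))) = (\<Sum>l\<in>{1..N}. c l * (t l - t (Suc l))) + c N * t (Suc N)"
    unfolding e sum.distrib using assms by (cases N) (auto simp: sum.delta')
  then show ?thesis using tele0[where c=c and t=t and N=N, OF assms] by simp
qed

lemma rsum_Suc: "rsum Es (Suc l) = rsum Es l + blk Es (Suc l)"
  by (simp add: rsum_def)

lemma rsum_0: "rsum Es 0 = 0" by (simp add: rsum_def)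

lemma part_facts:
  assumes part: "ordered_partition n Es" and n: "n \<ge> 1"
  shows "length Es \<ge> 1" "\<And>l. 1 \<le> l \<Longrightarrow> l \<le> length Es \<Longrightarrow> rsum Es l \<ge> 1" "rsum Es (length Es) = n"
proof -
  have ne: "\<And>E. E \<in> set Es \<Longrightarrow> E \<noteq> {}" and dis: "\<And>i j. i < length Es \<Longrightarrow> j < length Es \<Longrightarrow> i \<noteq> j \<Longrightarrow> Es ! i \<inter> Es ! j = {}"
    and un: "\<Union> (set Es) = {1..n}" using part unfolding ordered_partition_def by auto
  have fin: "\<And>E. E \<in> set Es \<Longrightarrow> finite E" using un by (metis Sup_upper finite_atLeastAtMost finite_subset)
  show N1: "length Es \<ge> 1"
  proof (rule ccontr)
    assume "\<not> 1 \<le> length Es" then have "Es = []" by (cases Es) auto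
    then show False using un n by auto
  qed
  show "rsum Es l \<ge> 1" if "1 \<le> l" "l \<le> length Es" for l
  proof -
    have "Es ! (l - 1) \<in> set Es" using that by auto
    then have "card (Es ! (l - 1)) \<ge> 1" using ne fin by (meson card_0_eq less_one not_le)
    then have "blk Es l \<ge> 1" by (simp add: blk_def)
    moreover have "blk Es l \<le> rsum Es l" unfolding rsum_def
      by (rule member_le_sum) (use that in auto)
    ultimately show ?thesis by simp
  qed
  have "rsum Es (length Es) = (\<Sum>i\<in>{0..<length Es}. card (Es ! i))"
    unfolding rsum_def blk_def
    by (rule sum.reindex_bij_witness[where i="\<lambda>i. Suc i" and j="\<lambda>l. l - 1"]) auto
  also have "\<dots> = card (\<Union>i\<in>{0..<length Es}. Es ! i)"
    by (rule card_UN_disjoint[symmetric]) (use fin dis in auto)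
  also have "(\<Union>i\<in>{0..<length Es}. Es ! i) = \<Union> (set Es)" by (simp add: nth_image)
  finally show "rsum Es (length Es) = n" using un by simp
qed

lemma FF1:
  assumes levy: "levy_measure_01 \<rho>" and N1: "length Es \<ge> 1"
  shows "FF \<rho> Es 1 t = ntr_density \<rho> Es t"
proof -
  let ?N = "length Es"
  define c where "c l = phi \<rho> (rsum Es l)" for l
  define s where "s l = (if l = ?N then 0 else t (Suc l))" for l
  have kk: "kk \<rho> Es l t = ennreal (c l * exp (- c l * (t l - s l))) * indicator {s l<..} (t l)" for l
    by (simp add: kk_def c_def s_def)
  have cnn: "0 \<le> c l" for l unfolding c_def by (rule phi_nonneg[OF levy])
  have "FF \<rho> Es 1 t = (\<Prod>l\<in>{1..?N}. ennreal (c l * exp (- c l * (t l - s l)))) * (\<Prod>l\<in>{1..?N}. indicator {s l<..} (t l))"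
    unfolding FF_def kk prod.distrib ..
  also have "(\<Prod>l\<in>{1..?N}. ennreal (c l * exp (- c l * (t l - s l)))) = ennreal (\<Prod>l\<in>{1..?N}. c l * exp (- c l * (t l - s l)))"
    by (rule prod_ennreal) (simp add: cnn)
  also have "(\<Prod>l\<in>{1..?N}. c l * exp (- c l * (t l - s l))) = (\<Prod>l\<in>{1..?N}. c l) * exp (- (\<Sum>l\<in>{1..?N}. c l * (t l - s l)))"
    by (simp add: prod.distrib exp_sum[symmetric] sum_negf)
  also have "(\<Sum>l\<in>{1..?N}. c l * (t l - s l)) = (\<Sum>l\<in>{1..?N}. (c l - c (l - 1)) * t l)"
    unfolding s_def by (rule tele) (simp add: c_def rsum_0 phi0)
  also have "(\<Sum>l\<in>{1..?N}. (c l - c (l - 1)) * t l) = (\<Sum>l\<in>{1..?N}. psi \<rho> (blk Es l) (rsum Es (l - 1)) * t l)"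
  proof (rule sum.cong)
    fix l assume "l \<in> {1..?N}"
    then obtain k where k: "l = Suc k" by (cases l) auto
    show "(c l - c (l - 1)) * t l = psi \<rho> (blk Es l) (rsum Es (l - 1)) * t l"
      unfolding psi_eq[OF levy] c_def k by (simp add: rsum_Suc)
  qed simp
  also have "exp (- (\<Sum>l\<in>{1..?N}. psi \<rho> (blk Es l) (rsum Es (l - 1)) * t l)) = (\<Prod>j\<in>{1..?N}. exp (- psi \<rho> (blk Es j) (rsum Es (j - 1)) * t j))"
    by (simp add: exp_sum[symmetric] sum_negf)
  also have "(\<Prod>l\<in>{1..?N}. indicator {s l<..} (t l) :: ennreal) = indicator {t. (\<forall>j\<in>{1..<?N}. t j > t (Suc j)) \<and> t ?N > 0} t"
  proof -
    have eqv: "(\<forall>l\<in>{1..?N}. s l < t l) \<longleftrightarrow> ((\<forall>j\<in>{1..<?N}. t j > t (Suc j)) \<and> t ?N > 0)"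
    proof
      assume a: "\<forall>l\<in>{1..?N}. s l < t l"
      show "(\<forall>j\<in>{1..<?N}. t j > t (Suc j)) \<and> t ?N > 0"
      proof
        show "\<forall>j\<in>{1..<?N}. t j > t (Suc j)"
        proof
          fix j assume "j \<in> {1..<?N}"
          then show "t j > t (Suc j)" using a[rule_format, of j] by (auto simp: s_def)
        qed
        show "t ?N > 0" using a[rule_format, of ?N] N1 by (auto simp: s_def)
      qed
    next
      assume a: "(\<forall>j\<in>{1..<?N}. t j > t (Suc j)) \<and> t ?N > 0"
      show "\<forall>l\<in>{1..?N}. s l < t l"
      proof
        fix l assume l: "l \<in> {1..?N}"
        show "s l < t l"
        proof (cases "l = ?N")
          case True then show ?thesis using a by (simp add: s_def)
        next
          case False then show ?thesis using a l by (simp add: s_def)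
        qed
      qed
    qed
    show ?thesis
    proof (cases "\<forall>l\<in>{1..?N}. s l < t l")
      case True
      then have "(\<Prod>l\<in>{1..?N}. indicator {s l<..} (t l) :: ennreal) = (\<Prod>l\<in>{1..?N}. 1)"
        by (intro prod.cong) auto
      then show ?thesis using True eqv by simp
    next
      case False
      then obtain l where l: "l \<in> {1..?N}" "\<not> s l < t l" by auto
      have pz: "(\<Prod>l\<in>{1..?N}. indicator {s l<..} (t l) :: ennreal) = 0"
        by (rule prod_zero) (use l in \<open>auto intro!: bexI[of _ l]\<close>)
      have nc: "t \<notin> {t. (\<forall>j\<in>{1..<?N}. t j > t (Suc j)) \<and> t ?N > 0}"
        by (subst mem_Collect_eq) (use False eqv in blast)
      show ?thesis by (simp only: pz indicator_simps(2)[OF nc])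
    qed
  qed
  finally show ?thesis unfolding ntr_density_def c_def by (simp add: mult.commute)
qed



theorem proposition5p2:
  fixes \<rho> :: "real measure" and n :: nat and Es :: "nat set list"
    and M :: "'a measure" and T :: "nat \<Rightarrow> 'a \<Rightarrow> real"
  assumes levy: "levy_measure_01 \<rho>"
    and mean1: "(\<integral>\<^sup>+ u. ennreal u \<partial>\<rho>) = 1"
    and n: "n \<ge> 1"
    and part: "ordered_partition n Es"
    and P: "prob_space M"
    and dens: "distributed M (PiM {1..length Es} (\<lambda>_. lborel))
                 (\<lambda>\<omega>. \<lambda>i\<in>{1..length Es}. T i \<omega>) (ntr_density \<rho> Es)"
  shows "(\<forall>j\<in>{1..<length Es}. \<exists>g.
            distributed M (PiM {Suc j..length Es} (\<lambda>_. lborel))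
              (\<lambda>\<omega>. \<lambda>i\<in>{Suc j..length Es}. T i \<omega>) g \<and>
            distributed M (PiM {j..length Es} (\<lambda>_. lborel))
              (\<lambda>\<omega>. \<lambda>i\<in>{j..length Es}. T i \<omega>)
              (\<lambda>t. g (restrict t {Suc j..length Es}) *
                   ennreal (phi \<rho> (rsum Es j) *
                            exp (- phi \<rho> (rsum Es j) * (t j - t (Suc j)))) *
                   indicator {t. t j > t (Suc j)} t))
       \<and> distributed M lborel (T (length Es))
           (\<lambda>y. ennreal (phi \<rho> n * exp (- phi \<rho> n * y)) * indicator {0<..} y)"
proof -
  let ?N = "length Es"
  define c where "c l = phi \<rho> (rsum Es l)" for l
  have N1: "?N \<ge> 1" and rpos: "\<And>l. 1 \<le> l \<Longrightarrow> l \<le> ?N \<Longrightarrow> rsum Es l \<ge> 1" and rN: "rsum Es ?N = n"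
    using part_facts[OF part n] by auto
  have cpos: "c l > 0" if "1 \<le> l" "l \<le> ?N" for l
    unfolding c_def using phi_pos[OF levy mean1 rpos[OF that]] .
  have P: "Suc d \<le> ?N \<Longrightarrow> distributed M (PiM {Suc d..?N} (\<lambda>_. lborel)) (\<lambda>\<omega>. \<lambda>i\<in>{Suc d..?N}. T i \<omega>) (FF \<rho> Es (Suc d))" for d
  proof (induction d)
    case 0
    have "FF \<rho> Es 1 = ntr_density \<rho> Es" using FF1[OF levy N1] by (simp add: fun_eq_iff)
    then show ?case using dens unfolding One_nat_def[symmetric] by (simp only:)
  next
    case (Suc d)
    define j where "j = Suc d"
    have jN: "j < ?N" using Suc.prems j_def by simp
    have IH: "distributed M (PiM {j..?N} (\<lambda>_. lborel)) (\<lambda>\<omega>. \<lambda>i\<in>{j..?N}. T i \<omega>) (FF \<rho> Es j)"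
      using Suc.IH Suc.prems j_def by (simp add: restrict_def)
    let ?h = "\<lambda>s y. ennreal (c j * exp (- c j * (s - y))) * indicator {y<..} s"
    have eqF: "FF \<rho> Es j = (\<lambda>t. FF \<rho> Es (Suc j) (restrict t {Suc j..?N}) * ?h (t j) (t (Suc j)))"
      using FF_step[OF jN] by (simp add: fun_eq_iff c_def)
    have "distributed M (PiM {Suc j..?N} (\<lambda>_. lborel)) (\<lambda>\<omega>. \<lambda>i\<in>{Suc j..?N}. T i \<omega>) (FF \<rho> Es (Suc j))"
    proof (rule marg[where j=j and jj="Suc j" and I="{j..?N}" and h="?h"])
      show "finite {Suc j..?N}" by simp
      show "j \<notin> {Suc j..?N}" by simp
      show "Suc j \<in> {Suc j..?N}" using jN by simp
      show "{j..?N} = insert j {Suc j..?N}" using jN by auto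
      show "distributed M (PiM {j..?N} (\<lambda>_. lborel)) (\<lambda>\<omega>. \<lambda>i\<in>{j..?N}. T i \<omega>)
          (\<lambda>t. FF \<rho> Es (Suc j) (restrict t {Suc j..?N}) * ?h (t j) (t (Suc j)))"
        using IH eqF by simp
      show "FF \<rho> Es (Suc j) \<in> borel_measurable (PiM {Suc j..?N} (\<lambda>_. lborel))" by (rule FF_meas)
      show "(\<lambda>y. ?h y a) \<in> borel_measurable borel" for a by measurable
      show "(\<integral>\<^sup>+ y. ?h y a \<partial>lborel) = 1" for a
        by (rule exp_int) (rule cpos, use jN j_def in auto)
    qed
    then show ?case using j_def by (simp add: restrict_def)
  qed
  show ?thesis
  proof
    show "\<forall>j\<in>{1..<?N}. \<exists>g.
            distributed M (PiM {Suc j..?N} (\<lambda>_. lborel))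
              (\<lambda>\<omega>. \<lambda>i\<in>{Suc j..?N}. T i \<omega>) g \<and>
            distributed M (PiM {j..?N} (\<lambda>_. lborel))
              (\<lambda>\<omega>. \<lambda>i\<in>{j..?N}. T i \<omega>)
              (\<lambda>t. g (restrict t {Suc j..?N}) *
                   ennreal (phi \<rho> (rsum Es j) *
                            exp (- phi \<rho> (rsum Es j) * (t j - t (Suc j)))) *
                   indicator {t. t j > t (Suc j)} t)"
    proof
      fix j assume j: "j \<in> {1..<?N}"
      then obtain d where d: "j = Suc d" by (cases j) auto
      have A: "distributed M (PiM {Suc j..?N} (\<lambda>_. lborel)) (\<lambda>\<omega>. \<lambda>i\<in>{Suc j..?N}. T i \<omega>) (FF \<rho> Es (Suc j))"
        using P[of j] j by (simp add: restrict_def)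
      have B: "distributed M (PiM {j..?N} (\<lambda>_. lborel)) (\<lambda>\<omega>. \<lambda>i\<in>{j..?N}. T i \<omega>) (FF \<rho> Es j)"
        using P[of d] j d by (simp add: restrict_def)
      have eqF: "FF \<rho> Es j = (\<lambda>t. FF \<rho> Es (Suc j) (restrict t {Suc j..?N}) *
                   ennreal (phi \<rho> (rsum Es j) *
                            exp (- phi \<rho> (rsum Es j) * (t j - t (Suc j)))) *
                   indicator {t. t j > t (Suc j)} t)"
        using FF_step[of j Es \<rho>] j by (auto simp: fun_eq_iff mult.assoc split: split_indicator)
      show "\<exists>g. distributed M (PiM {Suc j..?N} (\<lambda>_. lborel))
              (\<lambda>\<omega>. \<lambda>i\<in>{Suc j..?N}. T i \<omega>) g \<and>
            distributed M (PiM {j..?N} (\<lambda>_. lborel))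
              (\<lambda>\<omega>. \<lambda>i\<in>{j..?N}. T i \<omega>)
              (\<lambda>t. g (restrict t {Suc j..?N}) *
                   ennreal (phi \<rho> (rsum Es j) *
                            exp (- phi \<rho> (rsum Es j) * (t j - t (Suc j)))) *
                   indicator {t. t j > t (Suc j)} t)"
        using A B eqF by (intro exI[of _ "FF \<rho> Es (Suc j)"]) simp
    qed
  next
    obtain d where d: "?N = Suc d" using N1 by (cases ?N) auto
    have PN: "distributed M (PiM {?N} (\<lambda>_. lborel)) (\<lambda>\<omega>. \<lambda>i\<in>{?N}. T i \<omega>) (FF \<rho> Es ?N)"
      using P[of d] d by (simp add: restrict_def)
    have eqN: "FF \<rho> Es ?N = (\<lambda>t. (\<lambda>y. ennreal (phi \<rho> n * exp (- phi \<rho> n * y)) * indicator {0<..} y) (t ?N))"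
      by (simp add: fun_eq_iff FF_def kk_def rN)
    show "distributed M lborel (T ?N) (\<lambda>y. ennreal (phi \<rho> n * exp (- phi \<rho> n * y)) * indicator {0<..} y)"
      by (rule single) (use PN eqN in simp, measurable)
  qed
qed

end
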